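(* (Ratio Test for Series with Unit Coefficients.) Let $\mathcal{A}$ be a finite-dimensional real associative commutative unital algebra with norm $\|\cdot\|$ and constant $m_{\mathcal{A}}>0$ such that $\|x\star y\|\le m_{\mathcal{A}}\|x\|\|y\|$ for all $x,y$. Consider a power series $\sum c_n\star(z-z_0)^n$ with $z_0\in\mathcal{A}$ and $c_n\in\mathcal{A}^\times$ for all $n$. Let $\alpha=\limsup_{n\to\infty}\left\|\frac{c_{n+1}}{c_n}\right\|$ and $R=\frac{1}{m_{\mathcal{A}}^2\alpha}$. Then $\sum c_n\star(z-z_0)^n$ is absolutely convergent for all $z$ with $z-z_0\in\mathcal{A}^\times$ and $\|z-z_0\|<R$. Moreover, if $\alpha=0$ then $\sum c_n\star(z-z_0)^n$ converges absolutely on all of $\mathcal{A}$.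
   Context: $\mathcal{A}^\times$ is the group of units of $\mathcal{A}$; $\frac{a}{b}=a\star b^{-1}$ for $b\in\mathcal{A}^\times$. Absolute convergence of $\sum a_n$ means convergence of $\sum\|a_n\|$. Convention $R=\infty$ when $\alpha=0$. *)

theory Defs
  imports "HOL-Analysis.Analysis"
begin

definition is_unit_el :: "'a::comm_ring_1 \<Rightarrow> bool" where
  "is_unit_el x \<longleftrightarrow> (\<exists>y. x * y = 1)"

definition unit_inv :: "'a::comm_ring_1 \<Rightarrow> 'a" where
  "unit_inv x = (THE y. x * y = 1)"

definition unit_div :: "'a::comm_ring_1 \<Rightarrow> 'a \<Rightarrow> 'a" where
  "unit_div a b = a * unit_inv b"

text \<open>Radius R = 1/(m^2 alpha), with the convention R = infinity when alpha = 0
  (and R = 0 when alpha = infinity).\<close>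
definition ratio_radius :: "real \<Rightarrow> ereal \<Rightarrow> ereal" where
  "ratio_radius m \<alpha> = (if \<alpha> = 0 then \<infinity> else 1 / (ereal (m\<^sup>2) * \<alpha>))"

end

theory Submission
  imports Defs
begin

lemma unit_inv_mult:
  fixes x :: "'a::comm_ring_1"
  assumes "is_unit_el x"
  shows "x * unit_inv x = 1"
proof -
  obtain y where y: "x * y = 1" using assms unfolding is_unit_el_def by blast
  have "\<exists>!y. x * y = 1"
  proof
    show "x * y = 1" by (rule y)
  next
    fix y' assume "x * y' = 1"
    then have "y * (x * y') = y" by simp
    then show "y' = y" using y by (simp add: mult.assoc[symmetric] mult.commute)
  qed
  then show ?thesis unfolding unit_inv_def by (rule theI')
qed

lemma key_summable:
  fixes c :: "nat \<Rightarrow> 'a::{real_normed_vector, real_algebra_1, comm_ring_1}"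
    and w :: 'a and m s :: real
  assumes m_pos: "m > 0"
    and norm_mult: "\<And>x y :: 'a. norm (x * y) \<le> m * norm x * norm y"
    and units: "\<And>n. is_unit_el (c n)"
    and lt: "limsup (\<lambda>n. ereal (norm (unit_div (c (Suc n)) (c n)))) < ereal s"
    and rs: "m\<^sup>2 * norm w * s < 1"
  shows "summable (\<lambda>n. norm (c n * w ^ n))"
proof -
  let ?q = "\<lambda>n. unit_div (c (Suc n)) (c n)"
  have ev: "\<forall>\<^sub>F n in sequentially. ereal (norm (?q n)) < ereal s"
    using Limsup_lessD[OF lt] .
  then obtain N where N: "\<And>n. n \<ge> N \<Longrightarrow> norm (?q n) < s"
    unfolding eventually_sequentially by auto
  show ?thesis
  proof (rule summable_ratio_test[where c = "m\<^sup>2 * norm w * s" and N = N])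
    show "m\<^sup>2 * norm w * s < 1" by (rule rs)
  next
    fix n assume n: "n \<ge> N"
    have eq: "c (Suc n) * w ^ Suc n = ?q n * ((c n * w ^ n) * w)"
    proof -
      have "?q n * c n = c (Suc n)"
        using unit_inv_mult[OF units[of n]] unfolding unit_div_def
        by (metis mult.assoc mult.commute mult_1_right)
      then show ?thesis by (metis mult.assoc mult.commute power_Suc2)
    qed
    have "norm (c (Suc n) * w ^ Suc n) \<le> m * norm (?q n) * norm ((c n * w ^ n) * w)"
      unfolding eq by (rule norm_mult)
    also have "\<dots> \<le> m * norm (?q n) * (m * norm (c n * w ^ n) * norm w)"
      using norm_mult m_pos by (intro mult_left_mono) auto
    also have "\<dots> = (m * m * norm w) * norm (?q n) * norm (c n * w ^ n)"
      by (simp add: algebra_simps)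
    also have "\<dots> \<le> (m * m * norm w) * s * norm (c n * w ^ n)"
      using N[OF n] m_pos by (intro mult_right_mono mult_left_mono) auto
    finally show "norm (norm (c (Suc n) * w ^ Suc n)) \<le> m\<^sup>2 * norm w * s * norm (norm (c n * w ^ n))"
      by (simp add: power2_eq_square)
  qed
qed

theorem theorem5p9:
  fixes c :: "nat \<Rightarrow> 'a::{real_normed_vector, real_algebra_1, comm_ring_1}"
    and z0 :: 'a and m :: real
  assumes findim: "\<exists>B. finite B \<and> span B = (UNIV :: 'a set)"
    and m_pos: "m > 0"
    and norm_mult: "\<And>x y :: 'a. norm (x * y) \<le> m * norm x * norm y"
    and units: "\<And>n. is_unit_el (c n)"
  defines "\<alpha> \<equiv> limsup (\<lambda>n. ereal (norm (unit_div (c (Suc n)) (c n))))"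
  defines "R \<equiv> ratio_radius m \<alpha>"
  shows "(\<forall>z. is_unit_el (z - z0) \<and> ereal (norm (z - z0)) < R
             \<longrightarrow> summable (\<lambda>n. norm (c n * (z - z0) ^ n)))
       \<and> (\<alpha> = 0 \<longrightarrow> (\<forall>z. summable (\<lambda>n. norm (c n * (z - z0) ^ n))))"
proof -
  have zero_case: "summable (\<lambda>n. norm (c n * w ^ n))" if a0: "\<alpha> = 0" for w :: 'a
  proof -
    define s where "s = 1 / (m\<^sup>2 * norm w + 1)"
    have pos: "m\<^sup>2 * norm w + 1 > 0" by (simp add: add_nonneg_pos)
    have "s > 0" unfolding s_def using pos by simp
    moreover have "m\<^sup>2 * norm w * s < 1" unfolding s_def using pos by (simp add: field_simps)
    ultimately show ?thesis
      using key_summable[OF m_pos norm_mult units, where s=s and w=w] a0 unfolding \<alpha>_def by simp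
  qed
  have main: "summable (\<lambda>n. norm (c n * w ^ n))" if lt: "ereal (norm w) < R" for w :: 'a
  proof -
    have a_nonneg: "\<alpha> \<ge> 0" unfolding \<alpha>_def
      by (rule le_Limsup) auto
    show ?thesis
    proof (cases "\<alpha> = 0")
      case True then show ?thesis by (rule zero_case)
    next
      case False
      show ?thesis
      proof (cases \<alpha>)
        case PInf
        have "R = 0" unfolding R_def ratio_radius_def using PInf m_pos by simp
        then show ?thesis using lt by simp
      next
        case MInf then show ?thesis using a_nonneg by simp
      next
        case (real a)
        have apos: "a > 0" using False a_nonneg real by simp
        have mpos2: "m\<^sup>2 > 0" using m_pos by simp
        have "R = ereal (1 / (m\<^sup>2 * a))" unfolding R_def ratio_radius_def
          using real False apos mpos2 by (simp add: divide_ereal_def field_simps)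
        then have w_lt: "norm w < 1 / (m\<^sup>2 * a)" using lt by simp
        then have "m\<^sup>2 * a * norm w < 1" using apos mpos2
          by (simp add: field_simps)
        define s where "s = (a + 1 / (m\<^sup>2 * norm w + m\<^sup>2 * a)) / 2"
        show ?thesis
        proof (cases "norm w = 0")
          case True
          then show ?thesis
            using key_summable[OF m_pos norm_mult units, where s="a+1" and w=w] real unfolding \<alpha>_def by simp
        next
          case wn: False
          have wpos: "norm w > 0" using wn by simp
          define t where "t = 1 / (m\<^sup>2 * norm w)"
          have at: "a < t" unfolding t_def using w_lt apos mpos2 wpos
            by (simp add: field_simps)
          define s where "s = (a + t) / 2"
          have as: "a < s" "s < t" unfolding s_def using at by auto
          have "m\<^sup>2 * norm w * s < m\<^sup>2 * norm w * t"
            using as mpos2 wpos by simp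
          also have "\<dots> = 1" unfolding t_def using mpos2 wpos by simp
          finally have "m\<^sup>2 * norm w * s < 1" .
          then show ?thesis
            using key_summable[OF m_pos norm_mult units, where s=s and w=w] real as unfolding \<alpha>_def by simp
        qed
      qed
    qed
  qed
  show ?thesis using main zero_case by blast
qed

end
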